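(* Let $\lambda$ be a pre-specified threshold, and let $\Pi^*_\lambda$ denote the set of solutions of the constrained problem $$\max_{\pi}\ R(\pi)\quad\text{subject to}\quad \mathrm{THR}(\pi)\le \lambda ,$$ where the maximum is over all individualized treatment rules $\pi:\mathcal X\to\{0,1\}$. (a) If $\lambda<\mathbb{E}[\mathrm{THR}(X)\cdot \mathbb{I}\{\tau(X)>0\}]$, then the oracle rule is $$\pi^*_\lambda(x)=\mathbb{I}\{\tau(x)-\beta^*\,\mathrm{THR}(x)>0\},$$ where $\beta^*$ satisfies $$\mathbb{E}\big[\mathrm{THR}(X)\cdot \mathbb{I}\{\tau(X)-\beta^*\,\mathrm{THR}(X)>0\}\big]=\lambda .$$ That is, this rule belongs to $\Pi^*_\lambda$. (b) If $\lambda\ge \mathbb{E}[\mathrm{THR}(X)\cdot \mathbb{I}\{\tau(X)>0\}]$, then the oracle rule is $\pi^*_\lambda(x)=\mathbb{I}\{\tau(x)>0\}$. This is the same rule that maximizes $R(\pi)$ when no harm constraint is imposed.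
   Context: We work in the potential outcomes framework with a superpopulation of random tuples $\{X,A,Y(1),Y(0)\}$. Here $X\in\mathcal X$ are pre-treatment covariates, $A\in\{0,1\}$ is a binary treatment, and $Y(a)\in\{0,1\}$ is the binary potential outcome under treatment $a$; the value $1$ is the favorable outcome. Notation: - Conditional average treatment effect: $\tau(x)=\mathbb{E}\{Y(1)-Y(0)\mid X=x\}$. - Conditional treatment harm rate: $\mathrm{THR}(x)=\mathbb{P}(Y(0)=1,Y(1)=0\mid X=x)$. - An individualized treatment rule (ITR) is any map $\pi:\mathcal X\to\{0,1\}$. - Reward of an ITR: $R(\pi)=\mathbb{E}[\pi(X)Y(1)+\{1-\pi(X)\}Y(0)]$. - Harm rate of an ITR: $\mathrm{THR}(\pi)=\mathbb{E}\{\mathrm{THR}(X)\pi(X)\}$. *)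

theory Defs
  imports "HOL-Probability.Probability"
begin

text \<open>Model. M is the distribution of the covariates X on the space 'x.
  K x is the conditional joint law of the pair (Y(0), Y(1)) given X = x,
  with outcomes in bool (True = 1 = favourable).\<close>

definition cate :: "('x \<Rightarrow> (bool \<times> bool) pmf) \<Rightarrow> 'x \<Rightarrow> real" where
  "cate K x = measure_pmf.expectation (K x) (\<lambda>(y0, y1). of_bool y1 - of_bool y0)"

definition cthr :: "('x \<Rightarrow> (bool \<times> bool) pmf) \<Rightarrow> 'x \<Rightarrow> real" where
  "cthr K x = measure_pmf.prob (K x) {(True, False)}"

definition itrs :: "'x measure \<Rightarrow> ('x \<Rightarrow> bool) set" where
  "itrs M = measurable M (count_space UNIV)"

definition reward :: "'x measure \<Rightarrow> ('x \<Rightarrow> (bool \<times> bool) pmf) \<Rightarrow> ('x \<Rightarrow> bool) \<Rightarrow> real" where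
  "reward M K \<pi> = (\<integral>x. measure_pmf.expectation (K x)
      (\<lambda>(y0, y1). of_bool (\<pi> x) * of_bool y1 + (1 - of_bool (\<pi> x)) * of_bool y0) \<partial>M)"

definition harm :: "'x measure \<Rightarrow> ('x \<Rightarrow> (bool \<times> bool) pmf) \<Rightarrow> ('x \<Rightarrow> bool) \<Rightarrow> real" where
  "harm M K \<pi> = (\<integral>x. cthr K x * of_bool (\<pi> x) \<partial>M)"

definition opt_set :: "'x measure \<Rightarrow> ('x \<Rightarrow> (bool \<times> bool) pmf) \<Rightarrow> real \<Rightarrow> ('x \<Rightarrow> bool) set" where
  "opt_set M K lam = {\<pi> \<in> itrs M. harm M K \<pi> \<le> lam \<and>
      (\<forall>\<pi>' \<in> itrs M. harm M K \<pi>' \<le> lam \<longrightarrow> reward M K \<pi>' \<le> reward M K \<pi>)}"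

end

theory Submission
  imports Defs
begin

lemma exp_pmf_bb:
  fixes f :: "bool \<times> bool \<Rightarrow> real"
  shows "measure_pmf.expectation p f =
    pmf p (False,False) * f (False,False) + pmf p (False,True) * f (False,True)
    + pmf p (True,False) * f (True,False) + pmf p (True,True) * f (True,True)"
proof -
  have "measure_pmf.expectation p f = (\<Sum>a\<in>UNIV. pmf p a *\<^sub>R f a)"
    by (rule integral_measure_pmf) auto
  then show ?thesis by (simp add: UNIV_Times_UNIV[symmetric] UNIV_bool algebra_simps)
qed

lemma cate_eq: "cate K x = pmf (K x) (False,True) - pmf (K x) (True,False)"
  unfolding cate_def by (simp add: exp_pmf_bb)

lemma cthr_eq: "cthr K x = pmf (K x) (True,False)"
  unfolding cthr_def by (simp add: measure_pmf_single)

lemma rew_pt: "measure_pmf.expectation (K x)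
      (\<lambda>(y0, y1). of_bool (\<pi> x) * of_bool y1 + (1 - of_bool (\<pi> x)) * of_bool y0)
   = (pmf (K x) (True,False) + pmf (K x) (True,True)) + of_bool (\<pi> x) * cate K x"
  by (simp add: exp_pmf_bb cate_eq algebra_simps)

context
  fixes M :: "'x measure" and K :: "'x \<Rightarrow> (bool \<times> bool) pmf"
  assumes P: "prob_space M"
    and meas: "\<And>ab. (\<lambda>x. pmf (K x) ab) \<in> borel_measurable M"
begin

interpretation prob_space M by (rule P)

lemma cate_meas[measurable]: "cate K \<in> borel_measurable M"
  unfolding cate_eq[abs_def] using meas by measurable

lemma cthr_meas[measurable]: "cthr K \<in> borel_measurable M"
  unfolding cthr_eq[abs_def] using meas by measurable

lemma bnd_int:
  assumes "f \<in> borel_measurable M" "\<And>x. \<bar>f x\<bar> \<le> (B::real)"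
  shows "integrable M f"
  using assms by (intro integrable_const_bound[where B=B]) auto

lemma cate_bnd: "\<bar>cate K x\<bar> \<le> 1"
  unfolding cate_eq using pmf_le_1[of "K x"] by (smt (verit) pmf_nonneg)

lemma cthr_bnd: "0 \<le> cthr K x" "cthr K x \<le> 1"
  unfolding cthr_eq by (auto simp: pmf_le_1)

lemma base_int: "integrable M (\<lambda>x. pmf (K x) (True,False) + pmf (K x) (True,True))"
  by (rule bnd_int[where B=2]) (use meas in measurable, smt (verit) pmf_le_1 pmf_nonneg)

lemma pic_int: "\<pi> \<in> itrs M \<Longrightarrow> integrable M (\<lambda>x. of_bool (\<pi> x) * cate K x)"
  by (rule bnd_int[where B=1]) (auto simp: itrs_def cate_bnd)

lemma pit_int: "\<pi> \<in> itrs M \<Longrightarrow> integrable M (\<lambda>x. cthr K x * of_bool (\<pi> x))"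
  by (rule bnd_int[where B=1]) (auto simp: itrs_def cthr_bnd abs_le_iff)

lemma reward_eq: "\<pi> \<in> itrs M \<Longrightarrow> reward M K \<pi> =
   (\<integral>x. pmf (K x) (True,False) + pmf (K x) (True,True) \<partial>M) + (\<integral>x. of_bool (\<pi> x) * cate K x \<partial>M)"
  unfolding reward_def rew_pt by (rule Bochner_Integration.integral_add[OF base_int pic_int])


lemma star_itrs: "(\<lambda>x. cate K x - \<beta> * cthr K x > 0) \<in> itrs M"
  unfolding itrs_def by measurable

lemma lagr:
  assumes "\<pi> \<in> itrs M"
  shows "reward M K \<pi> - \<beta> * harm M K \<pi> \<le>
     reward M K (\<lambda>x. cate K x - \<beta> * cthr K x > 0) - \<beta> * harm M K (\<lambda>x. cate K x - \<beta> * cthr K x > 0)"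
proof -
  let ?s = "\<lambda>x. cate K x - \<beta> * cthr K x > 0"
  have "(\<integral>x. of_bool (\<pi> x) * cate K x - \<beta> * (cthr K x * of_bool (\<pi> x)) \<partial>M)
     \<le> (\<integral>x. of_bool (?s x) * cate K x - \<beta> * (cthr K x * of_bool (?s x)) \<partial>M)"
    using Bochner_Integration.integrable_diff[OF pic_int[OF assms] integrable_mult_right[OF pit_int[OF assms]]]
      Bochner_Integration.integrable_diff[OF pic_int[OF star_itrs] integrable_mult_right[OF pit_int[OF star_itrs]]]
    by (intro integral_mono) auto
  moreover have "(\<integral>x. of_bool (\<pi> x) * cate K x - \<beta> * (cthr K x * of_bool (\<pi> x)) \<partial>M)
     = (\<integral>x. of_bool (\<pi> x) * cate K x \<partial>M) - \<beta> * harm M K \<pi>"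
    unfolding harm_def
    by (subst Bochner_Integration.integral_diff[OF pic_int[OF assms] integrable_mult_right[OF pit_int[OF assms]]]) simp
  moreover have "(\<integral>x. of_bool (?s x) * cate K x - \<beta> * (cthr K x * of_bool (?s x)) \<partial>M)
     = (\<integral>x. of_bool (?s x) * cate K x \<partial>M) - \<beta> * harm M K ?s"
    unfolding harm_def
    by (subst Bochner_Integration.integral_diff[OF pic_int[OF star_itrs] integrable_mult_right[OF pit_int[OF star_itrs]]]) simp
  ultimately show ?thesis using reward_eq[OF assms] reward_eq[OF star_itrs[of \<beta>]] by linarith
qed

lemma harm_nonneg_neg:
  assumes "\<beta> < 0"
  shows "(\<integral>x. cthr K x * of_bool (cate K x > 0) \<partial>M) \<le> harm M K (\<lambda>x. cate K x - \<beta> * cthr K x > 0)"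
  unfolding harm_def
proof (rule integral_mono)
  show "integrable M (\<lambda>x. cthr K x * of_bool (cate K x > 0))"
    by (rule pit_int) (unfold itrs_def, measurable)
  show "integrable M (\<lambda>x. cthr K x * of_bool (cate K x - \<beta> * cthr K x > 0))"
    by (rule pit_int[OF star_itrs])
  fix x
  have "0 \<le> cthr K x" by (rule cthr_bnd)
  moreover have "\<beta> * cthr K x \<le> 0" using assms \<open>0 \<le> cthr K x\<close> by (intro mult_nonpos_nonneg) auto
  ultimately show "cthr K x * of_bool (cate K x > 0) \<le> cthr K x * of_bool (cate K x - \<beta> * cthr K x > 0)"
    by auto
qed

end

theorem theorem1:
  fixes M :: "'x measure" and K :: "'x \<Rightarrow> (bool \<times> bool) pmf" and lam :: real
  assumes "prob_space M"
    and "\<And>ab. (\<lambda>x. pmf (K x) ab) \<in> borel_measurable M"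
  shows "(lam < (\<integral>x. cthr K x * of_bool (cate K x > 0) \<partial>M) \<longrightarrow>
            (\<forall>\<beta>::real. (\<integral>x. cthr K x * of_bool (cate K x - \<beta> * cthr K x > 0) \<partial>M) = lam \<longrightarrow>
               (\<lambda>x. cate K x - \<beta> * cthr K x > 0) \<in> opt_set M K lam))
       \<and> (lam \<ge> (\<integral>x. cthr K x * of_bool (cate K x > 0) \<partial>M) \<longrightarrow>
            (\<lambda>x. cate K x > 0) \<in> opt_set M K lam \<and>
            (\<forall>\<pi> \<in> itrs M. reward M K \<pi> \<le> reward M K (\<lambda>x. cate K x > 0)))"
proof (intro conjI impI allI ballI)
  note L = lagr[OF assms] and SI = star_itrs[OF assms] and HN = harm_nonneg_neg[OF assms]
  fix \<beta> :: real
  assume lt: "lam < (\<integral>x. cthr K x * of_bool (cate K x > 0) \<partial>M)"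
    and eq: "(\<integral>x. cthr K x * of_bool (cate K x - \<beta> * cthr K x > 0) \<partial>M) = lam"
  have h: "harm M K (\<lambda>x. cate K x - \<beta> * cthr K x > 0) = lam"
    using eq unfolding harm_def .
  have b: "\<beta> \<ge> 0"
  proof (rule ccontr)
    assume "\<not> \<beta> \<ge> 0"
    then have "\<beta> < 0" by simp
    from HN[OF this] h lt show False by simp
  qed
  show "(\<lambda>x. cate K x - \<beta> * cthr K x > 0) \<in> opt_set M K lam"
    unfolding opt_set_def
  proof (intro CollectI conjI ballI impI)
    show "(\<lambda>x. cate K x - \<beta> * cthr K x > 0) \<in> itrs M" by (rule SI)
    show "harm M K (\<lambda>x. cate K x - \<beta> * cthr K x > 0) \<le> lam" using h by simp
    fix \<pi>' assume p: "\<pi>' \<in> itrs M" and hp: "harm M K \<pi>' \<le> lam"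
    have "\<beta> * harm M K \<pi>' \<le> \<beta> * lam" by (rule mult_left_mono[OF hp b])
    moreover have "\<beta> * harm M K (\<lambda>x. cate K x - \<beta> * cthr K x > 0) = \<beta> * lam" using h by simp
    ultimately show "reward M K \<pi>' \<le> reward M K (\<lambda>x. cate K x - \<beta> * cthr K x > 0)"
      using L[OF p, of \<beta>] by linarith
  qed
next
  note L = lagr[OF assms] and SI = star_itrs[OF assms]
  assume ge: "lam \<ge> (\<integral>x. cthr K x * of_bool (cate K x > 0) \<partial>M)"
  have e: "(\<lambda>x. cate K x - 0 * cthr K x > 0) = (\<lambda>x. cate K x > 0)" by simp
  have I: "(\<lambda>x. cate K x > 0) \<in> itrs M" using SI[of 0] by simp
  have R: "reward M K \<pi> \<le> reward M K (\<lambda>x. cate K x > 0)" if "\<pi> \<in> itrs M" for \<pi>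
    using L[OF that, of 0] by simp
  show "(\<lambda>x. cate K x > 0) \<in> opt_set M K lam"
    unfolding opt_set_def using I R ge by (simp add: harm_def)
  fix \<pi> assume "\<pi> \<in> itrs M"
  then show "reward M K \<pi> \<le> reward M K (\<lambda>x. cate K x > 0)" by (rule R)
qed

end
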